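(* Let $T>0$ and $0<\tau_0\leq T$. Let $\mu\colon[0,\tau_0]\to[0,+\infty[$ be a modulus of continuity, i.e. a continuous, concave, strictly increasing function with $\mu(0)=0$. Let $\nu\colon\,]0,T]\to\,]0,+\infty[$ be a non-decreasing continuous function such that for some $\kappa>0$, $$\nu(t/2)\geq\kappa\,\nu(t)\quad\text{for all } t\in\,]0,T].$$ Let $a\colon[0,T]\to\mathbb R$ be a bounded function for which there is a constant $C>0$ with $$|a(t+\tau)-a(t)|\leq \frac{C}{\nu(t)}\mu(\tau)\quad\text{whenever } 0\leq\tau\leq\tau_0,\ t,t+\tau\in\,]0,T].$$ Let $\rho\in C^\infty(\mathbb R)$ with $\operatorname{supp}\rho\subset[-1,1]$, $\rho\geq0$, $\int_{\mathbb R}\rho(s)\,ds=1$, and set $\rho_\epsilon(s)=\frac1\epsilon\rho(s/\epsilon)$. For $0<\epsilon\leq\tau_0$ define $$\tilde a_\epsilon(t)=\begin{cases}a(\epsilon)& t\leq\epsilon,\\ a(t)&\epsilon\leq t\leq T,\\ a(T)& T\leq t,\end{cases}\qquad a_\epsilon(t)=\int_{-\epsilon}^{\epsilon}\rho_\epsilon(s)\tilde a_\epsilon(t-s)\,ds,\quad t\in\mathbb R.$$ Then there exist constants $C',C''>0$, depending only on $C$, $\rho$, $\kappa$ and $\|a\|_\infty$, such that for all $0<\epsilon\leq\tau_0$ and all $t\in\,]0,T]$, $$|a_\epsilon(t)-\tilde a_\epsilon(t)|\leq C'\min\Big\{1,\frac{\mu(\epsilon)}{\nu(t)}\Big\}\quad\text{and}\quad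 |a_\epsilon'(t)|\leq \frac{C''}{\epsilon}\min\Big\{1,\frac{\mu(\epsilon)}{\nu(t)}\Big\}.$$ *)

theory Defs
  imports "HOL-Analysis.Analysis"
begin

definition smooth_real :: "(real \<Rightarrow> real) \<Rightarrow> bool" where
  "smooth_real f \<longleftrightarrow> (\<exists>D :: nat \<Rightarrow> real \<Rightarrow> real. D 0 = f \<and>
      (\<forall>n x. (D n has_real_derivative D (Suc n) x) (at x)))"

definition a_tilde :: "(real \<Rightarrow> real) \<Rightarrow> real \<Rightarrow> real \<Rightarrow> real \<Rightarrow> real" where
  "a_tilde a T eps t = (if t \<le> eps then a eps else if t \<le> T then a t else a T)"

definition a_moll :: "(real \<Rightarrow> real) \<Rightarrow> (real \<Rightarrow> real) \<Rightarrow> real \<Rightarrow> real \<Rightarrow> real \<Rightarrow> real" where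
  "a_moll \<rho> a T eps t = integral {-eps..eps} (\<lambda>s. (1/eps) * \<rho> (s/eps) * a_tilde a T eps (t - s))"

end

theory Submission
  imports Defs
begin

context
  fixes \<rho> \<rho>' :: "real \<Rightarrow> real" and C \<kappa> M T \<tau>0 \<epsilon> B :: real and \<mu> \<nu> a :: "real \<Rightarrow> real"
  assumes C: "C > 0" and ka: "\<kappa> > 0" and M: "M \<ge> 0"
    and rho_deriv: "\<And>x. (\<rho> has_real_derivative \<rho>' x) (at x)"
    and rho'_cont: "continuous_on UNIV \<rho>'"
    and rho0: "\<forall>s. \<bar>s\<bar> > 1 \<longrightarrow> \<rho> s = 0"
    and rhopos: "\<forall>s. \<rho> s \<ge> 0"
    and rhoint: "(\<rho> has_integral 1) UNIV"
    and Bpos: "B > 0" and Bb: "\<And>s. \<bar>s\<bar> \<le> 1 \<Longrightarrow> \<bar>\<rho>' s\<bar> \<le> B"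
    and T: "T > 0" "0 < \<tau>0" "\<tau>0 \<le> T"
    and mucont: "continuous_on {0..\<tau>0} \<mu>" and mumono: "strict_mono_on {0..\<tau>0} \<mu>"
    and mu0: "\<mu> 0 = 0" and mupos: "\<forall>x\<in>{0..\<tau>0}. \<mu> x \<ge> 0"
    and numono: "mono_on {0<..T} \<nu>" and nupos: "\<forall>t\<in>{0<..T}. \<nu> t > 0"
    and nuhalf: "\<forall>t\<in>{0<..T}. \<nu> (t/2) \<ge> \<kappa> * \<nu> t"
    and aM: "\<forall>t\<in>{0..T}. \<bar>a t\<bar> \<le> M"
    and amod: "\<forall>t \<tau>. 0 \<le> \<tau> \<and> \<tau> \<le> \<tau>0 \<and> t \<in> {0<..T} \<and> t + \<tau> \<in> {0<..T} \<longrightarrow>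
              \<bar>a (t + \<tau>) - a t\<bar> \<le> C / \<nu> t * \<mu> \<tau>"
    and eps: "0 < \<epsilon>" "\<epsilon> \<le> \<tau>0"
begin

definition "clip x = max \<epsilon> (min T x)"

lemma at_clip: "a_tilde a T \<epsilon> x = a (clip x)"
  using T eps by (auto simp: a_tilde_def clip_def)

lemma clip_in: "clip x \<in> {\<epsilon>..T}"
  using T eps by (auto simp: clip_def)

lemma at_bound: "\<bar>a_tilde a T \<epsilon> x\<bar> \<le> M"
  using clip_in[of x] aM eps unfolding at_clip by auto

lemma a_cont: "continuous_on {\<epsilon>..T} a"
  unfolding continuous_on_iff
proof (intro ballI allI impI)
  fix x e :: real assume x: "x \<in> {\<epsilon>..T}" and e: "e > 0"
  define L where "L = C / \<nu> \<epsilon>"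
  have nue: "\<nu> \<epsilon> > 0" using nupos eps T by auto
  have L: "L > 0" using C nue by (simp add: L_def)
  from mucont have "\<exists>d>0. \<forall>y\<in>{0..\<tau>0}. dist y 0 < d \<longrightarrow> dist (\<mu> y) (\<mu> 0) < e / L"
  proof -
    have "0 \<in> {0..\<tau>0}" using T by auto
    moreover have "e / L > 0" using e L by simp
    ultimately show ?thesis using mucont unfolding continuous_on_iff by blast
  qed
  then obtain d0 where d0: "d0 > 0" "\<forall>y\<in>{0..\<tau>0}. dist y 0 < d0 \<longrightarrow> dist (\<mu> y) (\<mu> 0) < e / L" by blast
  show "\<exists>d>0. \<forall>x'\<in>{\<epsilon>..T}. dist x' x < d \<longrightarrow> dist (a x') (a x) < e"
  proof (intro exI[of _ "min d0 \<tau>0"] conjI ballI impI)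
    show "min d0 \<tau>0 > 0" using d0 T by simp
    fix x' assume x': "x' \<in> {\<epsilon>..T}" and dx: "dist x' x < min d0 \<tau>0"
    define p where "p = min x x'"
    define \<tau> where "\<tau> = \<bar>x' - x\<bar>"
    have p: "p \<in> {0<..T}" "p + \<tau> \<in> {0<..T}" using x x' eps unfolding p_def \<tau>_def by auto
    have tau: "0 \<le> \<tau>" "\<tau> \<le> \<tau>0" "\<tau> < d0" using dx unfolding \<tau>_def dist_real_def by auto
    have "\<bar>a x' - a x\<bar> = \<bar>a (p + \<tau>) - a p\<bar>"
      unfolding p_def \<tau>_def by (cases "x \<le> x'") (auto simp: abs_minus_commute)
    also have "\<dots> \<le> C / \<nu> p * \<mu> \<tau>" using amod p tau by blast
    also have "\<dots> \<le> L * \<mu> \<tau>"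
    proof (rule mult_right_mono)
      have "\<nu> \<epsilon> \<le> \<nu> p" using numono p x x' eps unfolding p_def
        by (intro mono_onD[OF numono]) auto
      then show "C / \<nu> p \<le> L" unfolding L_def using C nue
        by (simp add: frac_le)
      show "0 \<le> \<mu> \<tau>" using mupos tau by auto
    qed
    also have "\<dots> < L * (e / L)"
    proof (rule mult_strict_left_mono[OF _ L])
      show "\<mu> \<tau> < e / L" using d0(2)[rule_format, of \<tau>] tau mu0 by (auto simp: dist_real_def)
    qed
    also have "\<dots> = e" using L by simp
    finally show "dist (a x') (a x) < e" by (simp add: dist_real_def)
  qed
qed

lemma at_cont: "continuous_on UNIV (a_tilde a T \<epsilon>)"
proof -
  have "continuous_on UNIV clip" unfolding clip_def by (intro continuous_intros)
  then have "continuous_on UNIV (a \<circ> clip)"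
    by (rule continuous_on_compose) (rule continuous_on_subset[OF a_cont], use clip_in in auto)
  then show ?thesis by (simp add: at_clip[abs_def] o_def)
qed

lemma clipdiff:
  assumes t: "t \<in> {0<..T}" and s: "\<bar>s\<bar> \<le> \<epsilon>"
  shows "\<bar>a_tilde a T \<epsilon> (t - s) - a_tilde a T \<epsilon> t\<bar> \<le> max (2*M) (C/\<kappa>) * min 1 (\<mu> \<epsilon> / \<nu> t)"
proof -
  define u where "u = clip (t - s)"
  define v where "v = clip t"
  define p where "p = min u v"
  define \<tau> where "\<tau> = \<bar>u - v\<bar>"
  have uv: "u \<in> {\<epsilon>..T}" "v \<in> {\<epsilon>..T}" using clip_in unfolding u_def v_def by auto
  have pt: "p \<ge> t/2" using t s eps T unfolding p_def u_def v_def clip_def by (auto simp: min_def max_def)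
  have taue: "\<tau> \<le> \<epsilon>" using t s eps T unfolding \<tau>_def u_def v_def clip_def by (auto simp: min_def max_def)
  have p: "p \<in> {0<..T}" "p + \<tau> \<in> {0<..T}" using uv eps unfolding p_def \<tau>_def by auto
  have tau: "0 \<le> \<tau>" "\<tau> \<le> \<tau>0" using taue eps unfolding \<tau>_def by auto
  have "\<bar>a u - a v\<bar> = \<bar>a (p + \<tau>) - a p\<bar>"
    unfolding p_def \<tau>_def by (cases "u \<le> v") (auto simp: abs_minus_commute)
  also have "\<dots> \<le> C / \<nu> p * \<mu> \<tau>" using amod p tau by blast
  finally have d1: "\<bar>a u - a v\<bar> \<le> C / \<nu> p * \<mu> \<tau>" .
  have nut: "\<nu> t > 0" using nupos t by auto
  have "\<nu> (t/2) \<le> \<nu> p" using t p pt by (intro mono_onD[OF numono]) auto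
  then have nup: "\<nu> p \<ge> \<kappa> * \<nu> t" using nuhalf t by force
  have kn: "\<kappa> * \<nu> t > 0" using ka nut by simp
  have mut: "\<mu> \<tau> \<le> \<mu> \<epsilon>"
  proof (cases "\<tau> = \<epsilon>")
    case False
    then have "\<tau> < \<epsilon>" using taue by simp
    then show ?thesis using strict_mono_onD[OF mumono, of \<tau> \<epsilon>] tau eps by auto
  qed simp
  have mupt: "0 \<le> \<mu> \<tau>" using mupos tau by auto
  have "C / \<nu> p * \<mu> \<tau> \<le> C / (\<kappa> * \<nu> t) * \<mu> \<epsilon>"
  proof (rule mult_mono)
    show "C / \<nu> p \<le> C / (\<kappa> * \<nu> t)" using C kn nup by (simp add: frac_le)
    show "0 \<le> C / (\<kappa> * \<nu> t)" using C kn by simp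
  qed (use mut mupt in auto)
  also have "\<dots> = (C/\<kappa>) * (\<mu> \<epsilon> / \<nu> t)" by simp
  finally have d2: "\<bar>a u - a v\<bar> \<le> (C/\<kappa>) * (\<mu> \<epsilon> / \<nu> t)" using d1 by linarith
  have d3: "\<bar>a u - a v\<bar> \<le> 2 * M" using aM uv eps by (smt (verit) atLeastAtMost_iff)
  have lhs: "\<bar>a_tilde a T \<epsilon> (t - s) - a_tilde a T \<epsilon> t\<bar> = \<bar>a u - a v\<bar>"
    unfolding u_def v_def at_clip ..
  have q0: "\<mu> \<epsilon> / \<nu> t \<ge> 0" using mupos eps nut by auto
  show ?thesis
  proof (cases "\<mu> \<epsilon> / \<nu> t \<le> 1")
    case True
    have "(C/\<kappa>) * (\<mu> \<epsilon> / \<nu> t) \<le> max (2*M) (C/\<kappa>) * (\<mu> \<epsilon> / \<nu> t)"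
      by (rule mult_right_mono[OF _ q0]) simp
    moreover have meq: "min 1 (\<mu> \<epsilon> / \<nu> t) = \<mu> \<epsilon> / \<nu> t" using True by simp
    ultimately show ?thesis using d2 unfolding lhs meq by linarith
  next
    case False
    then have "min 1 (\<mu> \<epsilon> / \<nu> t) = 1" by simp
    then show ?thesis using d3 lhs by simp
  qed
qed

lemma rho_cont: "continuous_on UNIV \<rho>"
  using rho_deriv by (meson DERIV_isCont continuous_at_imp_continuous_on)

lemma rho'_zero: assumes "\<bar>y\<bar> > 1" shows "\<rho>' y = 0"
proof -
  define S where "S = (if y > 1 then {1<..} else {..<-1::real})"
  have S: "open S" "y \<in> S" using assms by (auto simp: S_def)
  have z: "\<And>x. x \<in> S \<Longrightarrow> 0 = \<rho> x" using rho0 by (auto simp: S_def split: if_splits)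
  have "((\<lambda>_. 0) has_real_derivative 0) (at y)" by simp
  then have "(\<rho> has_real_derivative 0) (at y)"
    by (rule has_field_derivative_transform_within_open[OF _ S z])
  then show ?thesis using rho_deriv DERIV_unique by blast
qed

lemma rho_int1: "(\<rho> has_integral 1) (cbox (-1) 1)"
proof -
  have "((\<lambda>x. if x \<in> cbox (-1) 1 then \<rho> x else 0) has_integral 1) UNIV"
  proof -
    have "(\<lambda>x. if x \<in> cbox (-1::real) 1 then \<rho> x else 0) = \<rho>"
      using rho0 by (auto simp: fun_eq_iff abs_real_def)
    then show ?thesis using rhoint by simp
  qed
  then show ?thesis using has_integral_restrict[of "cbox (-1) 1" UNIV \<rho> 1] by simp
qed

lemma phi_int: "((\<lambda>s. 1/\<epsilon> * \<rho> (s/\<epsilon>)) has_integral 1) {-\<epsilon>..\<epsilon>}"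
proof -
  have "((\<lambda>x. \<rho> ((1/\<epsilon>) *\<^sub>R x + 0)) has_integral (1 /\<^sub>R (1/\<epsilon>) ^ DIM(real)))
          (cbox ((-1 - 0) /\<^sub>R (1/\<epsilon>)) ((1 - 0) /\<^sub>R (1/\<epsilon>)))"
    by (rule has_integral_affinity'[OF rho_int1]) (use eps in simp)
  then have "((\<lambda>x. \<rho> (x/\<epsilon>)) has_integral \<epsilon>) {-\<epsilon>..\<epsilon>}"
    by (simp add: divide_inverse mult.commute)
  then have "((\<lambda>x. 1/\<epsilon> * \<rho> (x/\<epsilon>)) has_integral (1/\<epsilon> * \<epsilon>)) {-\<epsilon>..\<epsilon>}"
    by (rule has_integral_mult_right)
  then show ?thesis using eps by simp
qed

lemma phi_cont: "continuous_on UNIV (\<lambda>s. 1/\<epsilon> * \<rho> (s/\<epsilon>))"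
  by (intro continuous_intros continuous_on_compose2[OF rho_cont]) (use eps in auto)

lemma P1:
  assumes t: "t \<in> {0<..T}"
  shows "\<bar>a_moll \<rho> a T \<epsilon> t - a_tilde a T \<epsilon> t\<bar> \<le> max (2*M) (C/\<kappa>) * min 1 (\<mu> \<epsilon> / \<nu> t)"
proof -
  define K where "K = max (2*M) (C/\<kappa>) * min 1 (\<mu> \<epsilon> / \<nu> t)"
  define ta where "ta = a_tilde a T \<epsilon>"
  have contg: "continuous_on {-\<epsilon>..\<epsilon>} (\<lambda>s. 1/\<epsilon> * \<rho> (s/\<epsilon>) * ta (t - s))"
    unfolding ta_def
    by (intro continuous_intros continuous_on_compose2[OF rho_cont] continuous_on_compose2[OF at_cont]) (use eps in auto)
  have ig: "(\<lambda>s. 1/\<epsilon> * \<rho> (s/\<epsilon>) * ta (t - s)) integrable_on {-\<epsilon>..\<epsilon>}"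
    by (rule integrable_continuous_real[OF contg])
  have ip: "((\<lambda>s. 1/\<epsilon> * \<rho> (s/\<epsilon>) * ta t) has_integral (1 * ta t)) {-\<epsilon>..\<epsilon>}"
    by (rule has_integral_mult_left[OF phi_int])
  have "((\<lambda>s. 1/\<epsilon> * \<rho> (s/\<epsilon>) * ta (t - s) - 1/\<epsilon> * \<rho> (s/\<epsilon>) * ta t) has_integral
        (a_moll \<rho> a T \<epsilon> t - 1 * ta t)) {-\<epsilon>..\<epsilon>}"
    unfolding a_moll_def ta_def[symmetric]
    by (rule has_integral_diff[OF integrable_integral[OF ig] ip])
  then have hi: "((\<lambda>s. 1/\<epsilon> * \<rho> (s/\<epsilon>) * (ta (t - s) - ta t)) has_integral
        (a_moll \<rho> a T \<epsilon> t - ta t)) {-\<epsilon>..\<epsilon>}"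
    by (simp add: algebra_simps)
  have kp: "((\<lambda>s. 1/\<epsilon> * \<rho> (s/\<epsilon>) * K) has_integral (1 * K)) {-\<epsilon>..\<epsilon>}"
    by (rule has_integral_mult_left[OF phi_int])
  have "norm (integral {-\<epsilon>..\<epsilon>} (\<lambda>s. 1/\<epsilon> * \<rho> (s/\<epsilon>) * (ta (t - s) - ta t)))
        \<le> integral {-\<epsilon>..\<epsilon>} (\<lambda>s. 1/\<epsilon> * \<rho> (s/\<epsilon>) * K)"
  proof (rule integral_norm_bound_integral)
    show "(\<lambda>s. 1/\<epsilon> * \<rho> (s/\<epsilon>) * (ta (t - s) - ta t)) integrable_on {-\<epsilon>..\<epsilon>}" using hi by blast
    show "(\<lambda>s. 1/\<epsilon> * \<rho> (s/\<epsilon>) * K) integrable_on {-\<epsilon>..\<epsilon>}" using kp by blast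
    fix s assume s: "s \<in> {-\<epsilon>..\<epsilon>}"
    have r: "1/\<epsilon> * \<rho> (s/\<epsilon>) \<ge> 0" using rhopos eps by simp
    have "\<bar>ta (t - s) - ta t\<bar> \<le> K" unfolding ta_def K_def by (rule clipdiff[OF t]) (use s in auto)
    then show "norm (1/\<epsilon> * \<rho> (s/\<epsilon>) * (ta (t - s) - ta t)) \<le> 1/\<epsilon> * \<rho> (s/\<epsilon>) * K"
    proof -
      have "norm (1/\<epsilon> * \<rho> (s/\<epsilon>) * (ta (t - s) - ta t)) = 1/\<epsilon> * \<rho> (s/\<epsilon>) * \<bar>ta (t - s) - ta t\<bar>"
        using rhopos eps by (simp add: abs_mult)
      also have "\<dots> \<le> 1/\<epsilon> * \<rho> (s/\<epsilon>) * K" by (rule mult_left_mono[OF \<open>\<bar>ta (t - s) - ta t\<bar> \<le> K\<close> r])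
      finally show ?thesis .
    qed
  qed
  then have "norm (a_moll \<rho> a T \<epsilon> t - ta t) \<le> 1 * K"
    unfolding integral_unique[OF hi] integral_unique[OF kp] .
  then have "\<bar>a_moll \<rho> a T \<epsilon> t - ta t\<bar> \<le> K" by simp
  then show ?thesis unfolding K_def ta_def .
qed

lemma moll_box:
  assumes x: "\<bar>x - t\<bar> \<le> \<epsilon>"
  shows "a_moll \<rho> a T \<epsilon> x = integral {t-2*\<epsilon>..t+2*\<epsilon>} (\<lambda>r. 1/\<epsilon> * \<rho> ((x-r)/\<epsilon>) * a_tilde a T \<epsilon> r)"
proof -
  define k where "k = (\<lambda>r. 1/\<epsilon> * \<rho> ((x-r)/\<epsilon>) * a_tilde a T \<epsilon> r)"
  have contk: "continuous_on UNIV k" unfolding k_def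
    by (intro continuous_intros continuous_on_compose2[OF rho_cont] at_cont) (use eps in auto)
  define I where "I = integral (cbox (x-\<epsilon>) (x+\<epsilon>)) k"
  have hk: "(k has_integral I) (cbox (x-\<epsilon>) (x+\<epsilon>))"
    unfolding I_def by (rule integrable_integral, rule integrable_continuous, rule continuous_on_subset[OF contk]) auto
  have "((\<lambda>y. k (1 *\<^sub>R y + x)) has_integral (I /\<^sub>R 1 ^ DIM(real)))
          (cbox ((x-\<epsilon> - x) /\<^sub>R 1) ((x+\<epsilon> - x) /\<^sub>R 1))"
    by (rule has_integral_affinity'[OF hk]) simp
  then have "((\<lambda>y. k (y + x)) has_integral I) {-\<epsilon>..\<epsilon>}" by simp
  then have "((\<lambda>y. k (- y + x)) has_integral I) {-\<epsilon>..- (-\<epsilon>)}"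
    by (rule iffD2[OF has_integral_reflect_real])
  then have "((\<lambda>s. 1/\<epsilon> * \<rho> (s/\<epsilon>) * a_tilde a T \<epsilon> (x - s)) has_integral I) {-\<epsilon>..\<epsilon>}"
    by (simp add: k_def)
  then have e1: "a_moll \<rho> a T \<epsilon> x = I" unfolding a_moll_def by (rule integral_unique)
  have "(k has_integral I) {t-2*\<epsilon>..t+2*\<epsilon>}"
  proof (rule has_integral_on_superset[OF hk])
    fix r assume "r \<notin> cbox (x-\<epsilon>) (x+\<epsilon>)"
    then have "\<bar>(x-r)/\<epsilon>\<bar> > 1" using eps by (auto simp: abs_real_def divide_simps split: if_splits)
    then show "k r = 0" using rho0 by (simp add: k_def)
  next
    show "cbox (x-\<epsilon>) (x+\<epsilon>) \<subseteq> {t-2*\<epsilon>..t+2*\<epsilon>}" using x by auto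
  qed
  then have "integral {t-2*\<epsilon>..t+2*\<epsilon>} k = I" by (rule integral_unique)
  then show ?thesis using e1 unfolding k_def by simp
qed

lemma P2:
  assumes t: "t \<in> {0<..T}"
  shows "\<exists>D. (a_moll \<rho> a T \<epsilon> has_real_derivative D) (at t)
           \<and> \<bar>D\<bar> \<le> (4 * B * max (2*M) (C/\<kappa>)) / \<epsilon> * min 1 (\<mu> \<epsilon> / \<nu> t)"
proof -
  define K where "K = max (2*M) (C/\<kappa>) * min 1 (\<mu> \<epsilon> / \<nu> t)"
  define ta where "ta = a_tilde a T \<epsilon>"
  define f where "f = (\<lambda>x r. 1/\<epsilon> * \<rho> ((x-r)/\<epsilon>) * ta r)"
  define fx where "fx = (\<lambda>x r. 1/\<epsilon> * (\<rho>' ((x-r)/\<epsilon>) * (1/\<epsilon>)) * ta r)"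
  define U where "U = ball t \<epsilon>"
  define lo where "lo = t - 2*\<epsilon>"
  define hi where "hi = t + 2*\<epsilon>"
  have tac: "continuous_on UNIV ta" unfolding ta_def by (rule at_cont)
  have dr: "((\<lambda>x. f x r) has_field_derivative fx x r) (at x within U)" for x r
  proof -
    have "((\<lambda>x. (x-r)/\<epsilon>) has_real_derivative 1/\<epsilon>) (at x)"
      using eps by (auto intro!: derivative_eq_intros)
    then have "((\<lambda>x. \<rho> ((x-r)/\<epsilon>)) has_real_derivative \<rho>' ((x-r)/\<epsilon>) * (1/\<epsilon>)) (at x)"
      by (rule DERIV_chain2[OF rho_deriv])
    then have "((\<lambda>x. 1/\<epsilon> * \<rho> ((x-r)/\<epsilon>) * ta r) has_real_derivative fx x r) (at x)"
      unfolding fx_def by (intro DERIV_cmult_right DERIV_cmult)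
    then show ?thesis unfolding f_def by (rule has_field_derivative_at_within)
  qed
  have intf: "f x integrable_on cbox lo hi" for x
    unfolding f_def
    by (rule integrable_continuous, intro continuous_intros continuous_on_compose2[OF rho_cont]
          continuous_on_subset[OF tac]) (use eps in auto)
  have cfx: "continuous_on (U \<times> cbox lo hi) (\<lambda>(x, r). fx x r)"
    unfolding fx_def split_beta
    by (intro continuous_intros continuous_on_compose2[OF rho'_cont]
          continuous_on_compose2[OF tac]) (use eps in auto)
  have Uo: "open U" "t \<in> U" using eps by (auto simp: U_def)
  have "((\<lambda>x. integral (cbox lo hi) (f x)) has_field_derivative integral (cbox lo hi) (fx t)) (at t within U)"
    apply (rule leibniz_rule_field_derivative)
        apply (rule dr)
       apply (rule intf)
      apply (rule cfx)
     apply (rule Uo(2))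
    apply (simp add: U_def)
    done
  then have "((\<lambda>x. integral (cbox lo hi) (f x)) has_field_derivative integral (cbox lo hi) (fx t)) (at t)"
    using at_within_open[OF Uo(2) Uo(1)] by simp
  then have der: "(a_moll \<rho> a T \<epsilon> has_real_derivative integral (cbox lo hi) (fx t)) (at t)"
  proof (rule has_field_derivative_transform_within_open)
    show "open U" "t \<in> U" using Uo by auto
    fix x assume "x \<in> U"
    then have "\<bar>x - t\<bar> \<le> \<epsilon>" by (auto simp: U_def dist_real_def)
    then show "integral (cbox lo hi) (f x) = a_moll \<rho> a T \<epsilon> x"
      using moll_box[of x t] by (simp add: f_def lo_def hi_def ta_def)
  qed
  define h where "h = (\<lambda>r. 1/\<epsilon> * (\<rho>' ((t-r)/\<epsilon>) * (1/\<epsilon>)))"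
  define G where "G = (\<lambda>r. -(1/\<epsilon>) * \<rho> ((t-r)/\<epsilon>))"
  have lohi: "lo \<le> hi" using eps by (simp add: lo_def hi_def)
  have "(h has_integral (G hi - G lo)) {lo..hi}"
  proof (rule fundamental_theorem_of_calculus[OF lohi])
    fix r
    have "((\<lambda>r. (t-r)/\<epsilon>) has_real_derivative -(1/\<epsilon>)) (at r)"
      using eps by (auto intro!: derivative_eq_intros)
    then have "((\<lambda>r. \<rho> ((t-r)/\<epsilon>)) has_real_derivative \<rho>' ((t-r)/\<epsilon>) * (-(1/\<epsilon>))) (at r)"
      by (rule DERIV_chain2[OF rho_deriv])
    then have "(G has_real_derivative h r) (at r)"
      unfolding G_def h_def using DERIV_cmult[where c="-(1/\<epsilon>)"] by fastforce
    then show "(G has_vector_derivative h r) (at r within {lo..hi})"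
      by (simp add: has_real_derivative_iff_has_vector_derivative has_vector_derivative_at_within)
  qed
  moreover have "G hi = 0" "G lo = 0" using rho0 eps by (auto simp: G_def hi_def lo_def)
  ultimately have h0: "(h has_integral 0) {lo..hi}" by simp
  have ifx: "fx t integrable_on {lo..hi}"
    unfolding fx_def
    by (rule integrable_continuous_real, intro continuous_intros continuous_on_compose2[OF rho'_cont]
          continuous_on_subset[OF tac]) (use eps in auto)
  have "((\<lambda>r. fx t r - h r * ta t) has_integral (integral {lo..hi} (fx t) - 0 * ta t)) {lo..hi}"
    by (rule has_integral_diff[OF integrable_integral[OF ifx] has_integral_mult_left[OF h0]])
  moreover have "(\<lambda>r. fx t r - h r * ta t) = (\<lambda>r. h r * (ta r - ta t))"
    unfolding fx_def h_def by (rule ext) (simp only: right_diff_distrib)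
  ultimately have hD: "((\<lambda>r. h r * (ta r - ta t)) has_integral (integral {lo..hi} (fx t))) {lo..hi}"
    by (simp only: mult_zero_left diff_zero)
  have K0: "K \<ge> 0" using clipdiff[OF t, of 0] eps unfolding K_def by simp
  have cI: "((\<lambda>r. B/(\<epsilon>*\<epsilon>) * K) has_integral ((hi - lo) * (B/(\<epsilon>*\<epsilon>) * K))) {lo..hi}"
    using has_integral_const_real[of "B/(\<epsilon>*\<epsilon>) * K" lo hi] lohi by simp
  have "norm (integral {lo..hi} (\<lambda>r. h r * (ta r - ta t))) \<le> integral {lo..hi} (\<lambda>r. B/(\<epsilon>*\<epsilon>) * K)"
  proof (rule integral_norm_bound_integral)
    show "(\<lambda>r. h r * (ta r - ta t)) integrable_on {lo..hi}" using hD by blast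
    show "(\<lambda>r. B/(\<epsilon>*\<epsilon>) * K) integrable_on {lo..hi}" using cI by blast
    fix r assume "r \<in> {lo..hi}"
    show "norm (h r * (ta r - ta t)) \<le> B/(\<epsilon>*\<epsilon>) * K"
    proof (cases "\<bar>t - r\<bar> \<le> \<epsilon>")
      case True
      have "\<bar>ta (t - (t - r)) - ta t\<bar> \<le> K" unfolding ta_def K_def by (rule clipdiff[OF t]) (use True in auto)
      then have d: "\<bar>ta r - ta t\<bar> \<le> K" by simp
      have "\<bar>h r\<bar> = \<bar>\<rho>' ((t-r)/\<epsilon>)\<bar> / (\<epsilon>*\<epsilon>)" using eps by (simp add: h_def abs_mult)
      also have "\<dots> \<le> B/(\<epsilon>*\<epsilon>)"
      proof -
        have "\<bar>(t-r)/\<epsilon>\<bar> \<le> 1" using True eps by (simp add: abs_divide)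
        then show ?thesis using Bb eps by (simp add: divide_right_mono)
      qed
      finally have hb: "\<bar>h r\<bar> \<le> B/(\<epsilon>*\<epsilon>)" .
      have "norm (h r * (ta r - ta t)) = \<bar>h r\<bar> * \<bar>ta r - ta t\<bar>" by (simp add: abs_mult)
      also have "\<dots> \<le> B/(\<epsilon>*\<epsilon>) * K" by (rule mult_mono[OF hb d]) (use Bpos eps in auto)
      finally show ?thesis .
    next
      case False
      then have "\<bar>(t-r)/\<epsilon>\<bar> > 1" using eps by (simp add: abs_divide)
      then have "h r = 0" using rho'_zero by (simp add: h_def)
      then show ?thesis using Bpos eps K0 by simp
    qed
  qed
  then have bnd: "\<bar>integral {lo..hi} (fx t)\<bar> \<le> (hi - lo) * (B/(\<epsilon>*\<epsilon>) * K)"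
    unfolding integral_unique[OF hD] integral_unique[OF cI] by simp
  have "(hi - lo) * (B/(\<epsilon>*\<epsilon>) * K) = (4 * B * max (2*M) (C/\<kappa>)) / \<epsilon> * min 1 (\<mu> \<epsilon> / \<nu> t)"
    using lohi eps unfolding K_def lo_def hi_def by (simp add: field_simps)
  then show ?thesis using der bnd by (intro exI[of _ "integral {lo..hi} (fx t)"]) simp
qed

end

theorem proposition1:
  fixes C \<kappa> M :: real and \<rho> :: "real \<Rightarrow> real"
  assumes "C > 0" and "\<kappa> > 0" and "M \<ge> 0"
    and "smooth_real \<rho>"
    and "\<forall>s. \<bar>s\<bar> > 1 \<longrightarrow> \<rho> s = 0"
    and "\<forall>s. \<rho> s \<ge> 0"
    and "(\<rho> has_integral 1) UNIV"
  shows "\<exists>C' C''. C' > 0 \<and> C'' > 0 \<and>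
    (\<forall>(T::real) (\<tau>0::real) (\<mu>::real \<Rightarrow> real) (\<nu>::real \<Rightarrow> real) (a::real \<Rightarrow> real).
      T > 0 \<and> 0 < \<tau>0 \<and> \<tau>0 \<le> T
      \<and> continuous_on {0..\<tau>0} \<mu> \<and> concave_on {0..\<tau>0} \<mu> \<and> strict_mono_on {0..\<tau>0} \<mu>
      \<and> \<mu> 0 = 0 \<and> (\<forall>x\<in>{0..\<tau>0}. \<mu> x \<ge> 0)
      \<and> mono_on {0<..T} \<nu> \<and> continuous_on {0<..T} \<nu> \<and> (\<forall>t\<in>{0<..T}. \<nu> t > 0)
      \<and> (\<forall>t\<in>{0<..T}. \<nu> (t/2) \<ge> \<kappa> * \<nu> t)
      \<and> (\<forall>t\<in>{0..T}. \<bar>a t\<bar> \<le> M)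
      \<and> (\<forall>t \<tau>. 0 \<le> \<tau> \<and> \<tau> \<le> \<tau>0 \<and> t \<in> {0<..T} \<and> t + \<tau> \<in> {0<..T} \<longrightarrow>
              \<bar>a (t + \<tau>) - a t\<bar> \<le> C / \<nu> t * \<mu> \<tau>)
      \<longrightarrow>
      (\<forall>\<epsilon> t. 0 < \<epsilon> \<and> \<epsilon> \<le> \<tau>0 \<and> t \<in> {0<..T} \<longrightarrow>
         \<bar>a_moll \<rho> a T \<epsilon> t - a_tilde a T \<epsilon> t\<bar> \<le> C' * min 1 (\<mu> \<epsilon> / \<nu> t)
         \<and> (\<exists>D. (a_moll \<rho> a T \<epsilon> has_real_derivative D) (at t)
                \<and> \<bar>D\<bar> \<le> C'' / \<epsilon> * min 1 (\<mu> \<epsilon> / \<nu> t))))"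
  proof -
  obtain D where D: "D 0 = \<rho>" "\<forall>n x. (D n has_real_derivative D (Suc n) x) (at x)"
    using assms(4) unfolding smooth_real_def by blast
  have rd: "\<And>x. (\<rho> has_real_derivative D 1 x) (at x)" using D by (metis One_nat_def)
  have rc: "continuous_on UNIV (D 1)"
    using D(2) by (meson DERIV_isCont continuous_at_imp_continuous_on)
  have "compact (D 1 ` {-1..1})"
    by (rule compact_continuous_image[OF continuous_on_subset[OF rc]]) auto
  then obtain B0 where B0: "\<forall>y\<in>D 1 ` {-1..1}. norm y \<le> B0"
    using compact_imp_bounded bounded_iff by metis
  define B where "B = \<bar>B0\<bar> + 1"
  have Bpos: "B > 0" unfolding B_def by simp
  have Bb: "\<And>s. \<bar>s\<bar> \<le> 1 \<Longrightarrow> \<bar>D 1 s\<bar> \<le> B"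
  proof -
    fix s :: real assume "\<bar>s\<bar> \<le> 1"
    then have "s \<in> {-1..1}" by auto
    then have "\<bar>D 1 s\<bar> \<le> B0" using B0 by auto
    then show "\<bar>D 1 s\<bar> \<le> B" unfolding B_def by simp
  qed
  have "C/\<kappa> > 0" using assms(1,2) by simp
  then have K: "max (2*M) (C/\<kappa>) > 0" by (simp add: less_max_iff_disj)
  show ?thesis
  proof (rule exI[of _ "max (2*M) (C/\<kappa>)"], rule exI[of _ "4 * B * max (2*M) (C/\<kappa>)"], intro conjI allI impI)
    show "max (2*M) (C/\<kappa>) > 0" by (rule K)
    show "4 * B * max (2*M) (C/\<kappa>) > 0" using K Bpos by simp
    fix T \<tau>0 :: real and \<mu> \<nu> a :: "real \<Rightarrow> real" and \<epsilon> t :: real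
    assume H: "T > 0 \<and> 0 < \<tau>0 \<and> \<tau>0 \<le> T
      \<and> continuous_on {0..\<tau>0} \<mu> \<and> concave_on {0..\<tau>0} \<mu> \<and> strict_mono_on {0..\<tau>0} \<mu>
      \<and> \<mu> 0 = 0 \<and> (\<forall>x\<in>{0..\<tau>0}. \<mu> x \<ge> 0)
      \<and> mono_on {0<..T} \<nu> \<and> continuous_on {0<..T} \<nu> \<and> (\<forall>t\<in>{0<..T}. \<nu> t > 0)
      \<and> (\<forall>t\<in>{0<..T}. \<nu> (t/2) \<ge> \<kappa> * \<nu> t)
      \<and> (\<forall>t\<in>{0..T}. \<bar>a t\<bar> \<le> M)
      \<and> (\<forall>t \<tau>. 0 \<le> \<tau> \<and> \<tau> \<le> \<tau>0 \<and> t \<in> {0<..T} \<and> t + \<tau> \<in> {0<..T} \<longrightarrow>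
              \<bar>a (t + \<tau>) - a t\<bar> \<le> C / \<nu> t * \<mu> \<tau>)"
    assume E: "0 < \<epsilon> \<and> \<epsilon> \<le> \<tau>0 \<and> t \<in> {0<..T}"
    from H have h1: "T > 0" "0 < \<tau>0" "\<tau>0 \<le> T" "continuous_on {0..\<tau>0} \<mu>" "strict_mono_on {0..\<tau>0} \<mu>"
      "\<mu> 0 = 0" "\<forall>x\<in>{0..\<tau>0}. \<mu> x \<ge> 0" "mono_on {0<..T} \<nu>" "\<forall>t\<in>{0<..T}. \<nu> t > 0"
      "\<forall>t\<in>{0<..T}. \<nu> (t/2) \<ge> \<kappa> * \<nu> t" "\<forall>t\<in>{0..T}. \<bar>a t\<bar> \<le> M"
      "\<forall>t \<tau>. 0 \<le> \<tau> \<and> \<tau> \<le> \<tau>0 \<and> t \<in> {0<..T} \<and> t + \<tau> \<in> {0<..T} \<longrightarrow>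
              \<bar>a (t + \<tau>) - a t\<bar> \<le> C / \<nu> t * \<mu> \<tau>" by auto
    from E have e1: "0 < \<epsilon>" "\<epsilon> \<le> \<tau>0" and tt: "t \<in> {0<..T}" by auto
    note P1' = P1[OF assms(1,2,3) rd rc assms(5,6,7) Bpos Bb h1 e1 tt]
    note P2' = P2[OF assms(1,2,3) rd rc assms(5,6,7) Bpos Bb h1 e1 tt]
    show "\<bar>a_moll \<rho> a T \<epsilon> t - a_tilde a T \<epsilon> t\<bar> \<le> max (2*M) (C/\<kappa>) * min 1 (\<mu> \<epsilon> / \<nu> t)"
      by (rule P1')
    show "\<exists>D. (a_moll \<rho> a T \<epsilon> has_real_derivative D) (at t)
                \<and> \<bar>D\<bar> \<le> 4 * B * max (2*M) (C/\<kappa>) / \<epsilon> * min 1 (\<mu> \<epsilon> / \<nu> t)"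
      by (rule P2')
  qed
qed

end
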